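(* Fix integers $m\ge1$ and $\theta\in(0,1]$, and let $f$ be a homogeneous voting rule. Suppose there exist $\delta>0$ and a neighborhood $U$ of the expected normalized profile $\hat P$ (among normalized continuous profiles on $\{1,\dots,m\}$, with the topology of weight vectors in $\mathbb R^{m!}$) such that $f$ is $\delta$-stable-CM in every continuous profile of $U$. Then $\lim_{n\to\infty}\rho(f,m,n,\theta)=1$.
   Context: A ranking is a strict total order on the candidates. A discrete profile $P$ consists of candidates, a voter set of size $n$ and a ranking $P_v$ per voter; $w(p,P)$ is the number of voters with ranking $p$. A continuous profile consists of candidates, total weight $w(P)>0$ and weights $w(p,P)\ge0$ summing to $w(P)$. The normalized profile $\bar P$ has weights $w(p,P)/w(P)$. A voting rule maps every profile (discrete or continuous) to one of its candidates; homogeneous means $f(P)=f(\bar P)$ for all $P$. For continuous profiles $Q,Q'$ on the same candidates, $d(Q,Q')=\max_p|w(p,Q)-w(p,Q')|$. CM (discrete): $f$ is CM in discrete $P$ if there is a discrete $Q$ with the same candidates and voters, $f(Q)\ne f(P)$, and every voter $v$ with $Q_v\ne P_v$ prefers $f(Q)$ to $f(P)$ according to $P_v$. CM from continuous $P$ to continuous $Q$: $Q$ has the same candidates and total weight as $P$, $f(Q)\ne f(P)$, and every ranking $p$ with $w(p,Q)<w(p,P)$ prefers $f(Q)$ to $f(P)$. $\delta$-stable-CM: $f$ is $\delta$-stable-CM in a continuous profile $P$ if there is a continuous profile $Q$ such that $f$ is CM from $P$ to $Q$ and $f(Q')=f(Q)$ for every continuous profile $Q'$ with $d(Q,Q')<\delta$.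 Perturbed Culture ($m,n\ge1$, $\theta\in(0,1]$): random discrete profile with candidates $\{1,\dots,m\}$, voters $\{1,\dots,n\}$, each voter independently having ranking $1\succ\cdots\succ m$ with probability $\theta$ and a uniformly random ranking with probability $1-\theta$. $\hat P$: total weight $1$, weight $\theta+\frac{1-\theta}{m!}$ on $1\succ\cdots\succ m$ and $\frac{1-\theta}{m!}$ on each other ranking. $\rho(f,m,n,\theta)$: probability that $f$ is CM in the random profile. *)

theory Defs
  imports "HOL-Probability.Probability" "HOL-Combinatorics.Multiset_Permutations"
begin

text \<open>A ranking is a strict total order on the candidates {1..m}, represented as the list
of candidates from most preferred to least preferred.\<close>

definition rankings :: "nat \<Rightarrow> nat list set" where
  "rankings m = permutations_of_set {1..m}"

definition prefers :: "nat list \<Rightarrow> nat \<Rightarrow> nat \<Rightarrow> bool" where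
  "prefers p a b \<longleftrightarrow> (\<exists>i j. i < j \<and> j < length p \<and> p ! i = a \<and> p ! j = b)"

definition disc_profiles :: "nat \<Rightarrow> nat \<Rightarrow> (nat \<Rightarrow> nat list) set" where
  "disc_profiles m n = ({1..n} \<rightarrow>\<^sub>E rankings m)"

definition disc_weight :: "nat \<Rightarrow> (nat \<Rightarrow> nat list) \<Rightarrow> nat list \<Rightarrow> real" where
  "disc_weight n P p = real (card {v \<in> {1..n}. P v = p})"

definition total_weight :: "nat \<Rightarrow> (nat list \<Rightarrow> real) \<Rightarrow> real" where
  "total_weight m w = (\<Sum>p\<in>rankings m. w p)"

definition cont_profile :: "nat \<Rightarrow> (nat list \<Rightarrow> real) \<Rightarrow> bool" where
  "cont_profile m w \<longleftrightarrow> (\<forall>p\<in>rankings m. 0 \<le> w p) \<and> (\<forall>p. p \<notin> rankings m \<longrightarrow> w p = 0)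
      \<and> total_weight m w > 0"

definition normalize :: "nat \<Rightarrow> (nat list \<Rightarrow> real) \<Rightarrow> (nat list \<Rightarrow> real)" where
  "normalize m w = (\<lambda>p. w p / total_weight m w)"

definition normalized_profile :: "nat \<Rightarrow> (nat list \<Rightarrow> real) \<Rightarrow> bool" where
  "normalized_profile m w \<longleftrightarrow> cont_profile m w \<and> total_weight m w = 1"

definition disc_normalized :: "nat \<Rightarrow> (nat \<Rightarrow> nat list) \<Rightarrow> (nat list \<Rightarrow> real)" where
  "disc_normalized n P = (\<lambda>p. disc_weight n P p / real n)"

definition prof_dist :: "nat \<Rightarrow> (nat list \<Rightarrow> real) \<Rightarrow> (nat list \<Rightarrow> real) \<Rightarrow> real" where
  "prof_dist m w w' = Max ((\<lambda>p. \<bar>w p - w' p\<bar>) ` rankings m)"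

text \<open>A voting rule (restricted to profiles with candidate set {1..m}) consists of its value
fd n P on discrete profiles with voters {1..n} and its value fc w on continuous profiles.\<close>
definition voting_rule :: "nat \<Rightarrow> (nat \<Rightarrow> (nat \<Rightarrow> nat list) \<Rightarrow> nat) \<Rightarrow> ((nat list \<Rightarrow> real) \<Rightarrow> nat) \<Rightarrow> bool" where
  "voting_rule m fd fc \<longleftrightarrow>
     (\<forall>n. \<forall>P\<in>disc_profiles m n. fd n P \<in> {1..m}) \<and>
     (\<forall>w. cont_profile m w \<longrightarrow> fc w \<in> {1..m})"

definition homogeneous :: "nat \<Rightarrow> (nat \<Rightarrow> (nat \<Rightarrow> nat list) \<Rightarrow> nat) \<Rightarrow> ((nat list \<Rightarrow> real) \<Rightarrow> nat) \<Rightarrow> bool" where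
  "homogeneous m fd fc \<longleftrightarrow>
     (\<forall>n\<ge>1. \<forall>P\<in>disc_profiles m n. fd n P = fc (disc_normalized n P)) \<and>
     (\<forall>w. cont_profile m w \<longrightarrow> fc w = fc (normalize m w))"

definition CM_disc :: "nat \<Rightarrow> (nat \<Rightarrow> (nat \<Rightarrow> nat list) \<Rightarrow> nat) \<Rightarrow> nat \<Rightarrow> (nat \<Rightarrow> nat list) \<Rightarrow> bool" where
  "CM_disc m fd n P \<longleftrightarrow> (\<exists>Q\<in>disc_profiles m n. fd n Q \<noteq> fd n P \<and>
      (\<forall>v\<in>{1..n}. Q v \<noteq> P v \<longrightarrow> prefers (P v) (fd n Q) (fd n P)))"

definition CM_cont :: "nat \<Rightarrow> ((nat list \<Rightarrow> real) \<Rightarrow> nat) \<Rightarrow> (nat list \<Rightarrow> real) \<Rightarrow> (nat list \<Rightarrow> real) \<Rightarrow> bool" where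
  "CM_cont m fc P Q \<longleftrightarrow> cont_profile m Q \<and> total_weight m Q = total_weight m P \<and> fc Q \<noteq> fc P \<and>
      (\<forall>p\<in>rankings m. Q p < P p \<longrightarrow> prefers p (fc Q) (fc P))"

definition stable_CM :: "nat \<Rightarrow> ((nat list \<Rightarrow> real) \<Rightarrow> nat) \<Rightarrow> real \<Rightarrow> (nat list \<Rightarrow> real) \<Rightarrow> bool" where
  "stable_CM m fc \<delta> P \<longleftrightarrow> (\<exists>Q. CM_cont m fc P Q \<and>
      (\<forall>Q'. cont_profile m Q' \<and> prof_dist m Q Q' < \<delta> \<longrightarrow> fc Q' = fc Q))"

definition voter_pmf :: "nat \<Rightarrow> real \<Rightarrow> nat list pmf" where
  "voter_pmf m \<theta> = bind_pmf (bernoulli_pmf \<theta>)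
     (\<lambda>b. if b then return_pmf [1..<m+1] else pmf_of_set (rankings m))"

definition PC_pmf :: "nat \<Rightarrow> nat \<Rightarrow> real \<Rightarrow> (nat \<Rightarrow> nat list) pmf" where
  "PC_pmf m n \<theta> = Pi_pmf {1..n} undefined (\<lambda>_. voter_pmf m \<theta>)"

definition P_hat :: "nat \<Rightarrow> real \<Rightarrow> (nat list \<Rightarrow> real)" where
  "P_hat m \<theta> = (\<lambda>p. if p = [1..<m+1] then \<theta> + (1 - \<theta>) / fact m
                     else if p \<in> rankings m then (1 - \<theta>) / fact m else 0)"

definition rho :: "nat \<Rightarrow> (nat \<Rightarrow> (nat \<Rightarrow> nat list) \<Rightarrow> nat) \<Rightarrow> nat \<Rightarrow> real \<Rightarrow> real" where
  "rho m fd n \<theta> = measure_pmf.prob (PC_pmf m n \<theta>) {P. CM_disc m fd n P}"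

end

theory Submission imports Defs begin

lemma rankings_finite: "finite (rankings m)"
  unfolding rankings_def by simp

lemma rankings_card: "card (rankings m) = fact m"
  unfolding rankings_def by simp

lemma rankings_ne: "rankings m \<noteq> {}"
  using rankings_card[of m] by (metis card.empty fact_nonzero)

lemma id_ranking: "[1..<m+1] \<in> rankings m"
  unfolding rankings_def permutations_of_set_def by auto

lemma pmf_voter:
  assumes "0 \<le> \<theta>" "\<theta> \<le> 1" "p \<in> rankings m"
  shows "pmf (voter_pmf m \<theta>) p = P_hat m \<theta> p"
proof -
  have "pmf (voter_pmf m \<theta>) p = \<theta> * pmf (return_pmf [1..<m+1]) p + (1-\<theta>) * pmf (pmf_of_set (rankings m)) p"
    unfolding voter_pmf_def pmf_bind using assms by simp
  also have "\<dots> = P_hat m \<theta> p"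
    using assms rankings_finite[of m] rankings_ne[of m] rankings_card[of m]
    by (auto simp: P_hat_def indicator_def)
  finally show ?thesis .
qed

lemma set_voter: "set_pmf (voter_pmf m \<theta>) \<subseteq> rankings m"
proof
  fix x assume "x \<in> set_pmf (voter_pmf m \<theta>)"
  then obtain b where "x \<in> set_pmf (if b then return_pmf [1..<m+1] else pmf_of_set (rankings m))"
    unfolding voter_pmf_def by auto
  moreover have "set_pmf (pmf_of_set (rankings m)) = rankings m"
    using rankings_finite[of m] rankings_ne[of m] by (rule_tac set_pmf_of_set) auto
  ultimately show "x \<in> rankings m" using id_ranking[of m] by (cases b) auto
qed

lemma set_PC: "set_pmf (PC_pmf m n \<theta>) \<subseteq> disc_profiles m n"
proof
  fix P assume "P \<in> set_pmf (PC_pmf m n \<theta>)"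
  hence "P \<in> PiE_dflt {1..n} undefined (set_pmf \<circ> (\<lambda>_. voter_pmf m \<theta>))"
    unfolding PC_pmf_def by (simp add: set_Pi_pmf)
  thus "P \<in> disc_profiles m n"
    using set_voter[of m \<theta>] unfolding disc_profiles_def PiE_dflt_def PiE_def extensional_def
    by auto
qed

lemma map_voter_bern:
  assumes "0 \<le> \<theta>" "\<theta> \<le> 1" "p \<in> rankings m"
  shows "map_pmf (\<lambda>r. r = p) (voter_pmf m \<theta>) = bernoulli_pmf (P_hat m \<theta> p)"
proof -
  have q: "0 \<le> P_hat m \<theta> p" "P_hat m \<theta> p \<le> 1"
    using pmf_voter[OF assms] by (metis pmf_nonneg, metis pmf_le_1)
  show ?thesis
  proof (rule pmf_eqI)
    fix b :: bool
    show "pmf (map_pmf (\<lambda>r. r = p) (voter_pmf m \<theta>)) b = pmf (bernoulli_pmf (P_hat m \<theta> p)) b"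
    proof (cases b)
      case True
      have "pmf (map_pmf (\<lambda>r. r = p) (voter_pmf m \<theta>)) True = pmf (voter_pmf m \<theta>) p"
        by (simp add: pmf_map vimage_def measure_pmf_single)
      then show ?thesis using True q pmf_voter[OF assms] by simp
    next
      case False
      have "pmf (map_pmf (\<lambda>r. r = p) (voter_pmf m \<theta>)) False = 1 - pmf (voter_pmf m \<theta>) p"
      proof -
        have "pmf (map_pmf (\<lambda>r. r = p) (voter_pmf m \<theta>)) False
            = measure_pmf.prob (voter_pmf m \<theta>) (UNIV - {p})"
          by (simp add: pmf_map vimage_def) (metis Collect_neg_eq Compl_eq_Diff_UNIV singleton_conv)
        also have "\<dots> = 1 - pmf (voter_pmf m \<theta>) p"
          by (simp add: measure_pmf.prob_compl[of "{p}", simplified] measure_pmf_single)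
        finally show ?thesis .
      qed
      then show ?thesis using False q pmf_voter[OF assms] by simp
    qed
  qed
qed

lemma count_binomial:
  assumes "0 \<le> \<theta>" "\<theta> \<le> 1" "p \<in> rankings m"
  shows "map_pmf (\<lambda>P. card {v\<in>{1..n}. P v = p}) (PC_pmf m n \<theta>) = binomial_pmf n (P_hat m \<theta> p)"
proof -
  have q: "P_hat m \<theta> p \<in> {0..1}"
    using pmf_voter[OF assms] by (metis atLeastAtMost_iff pmf_nonneg pmf_le_1)
  have "binomial_pmf n (P_hat m \<theta> p) = map_pmf (\<lambda>f. card {x\<in>{1..n}. f x})
        (Pi_pmf {1..n} (undefined = p) (\<lambda>_. bernoulli_pmf (P_hat m \<theta> p)))"
    by (rule binomial_pmf_altdef') (use q in auto)
  also have "Pi_pmf {1..n} (undefined = p) (\<lambda>_. bernoulli_pmf (P_hat m \<theta> p))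
      = Pi_pmf {1..n} (undefined = p) (\<lambda>_. map_pmf (\<lambda>r. r = p) (voter_pmf m \<theta>))"
    using map_voter_bern[OF assms] by simp
  also have "\<dots> = map_pmf (\<lambda>h. (\<lambda>r. r = p) \<circ> h) (PC_pmf m n \<theta>)"
    unfolding PC_pmf_def by (rule Pi_pmf_map) auto
  finally show ?thesis by (simp add: pmf.map_comp o_def)
qed

lemma bad_prob:
  assumes "0 \<le> \<theta>" "\<theta> \<le> 1" "p \<in> rankings m" "n > 0" "\<epsilon> \<ge> 0"
  shows "measure_pmf.prob (PC_pmf m n \<theta>) {P. \<bar>disc_weight n P p / n - P_hat m \<theta> p\<bar> \<ge> \<epsilon>}
     \<le> 2 * exp (-2 * n * \<epsilon>\<^sup>2)"
proof -
  have q: "P_hat m \<theta> p \<in> {0..1}"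
    using pmf_voter[OF assms(1-3)] by (metis atLeastAtMost_iff pmf_nonneg pmf_le_1)
  interpret binomial_distribution n "P_hat m \<theta> p" by unfold_locales (rule q)
  have "measure_pmf.prob (PC_pmf m n \<theta>) {P. \<bar>disc_weight n P p / n - P_hat m \<theta> p\<bar> \<ge> \<epsilon>}
     = measure_pmf.prob (map_pmf (\<lambda>P. card {v\<in>{1..n}. P v = p}) (PC_pmf m n \<theta>))
          {x. \<bar>x / n - P_hat m \<theta> p\<bar> \<ge> \<epsilon>}"
    by (simp add: disc_weight_def)
  also have "\<dots> \<le> 2 * exp (real_of_int (- 2 * int n) * \<epsilon>\<^sup>2)"
    unfolding count_binomial[OF assms(1-3)] by (rule prob_abs_ge') (use assms in auto)
  also have "\<dots> = 2 * exp (-2 * real n * \<epsilon>\<^sup>2)" by simp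
  finally show ?thesis .
qed


lemma floor_round:
  assumes "finite S" "\<forall>p\<in>S. 0 \<le> x p"
  shows "\<exists>g::'a\<Rightarrow>nat. int (sum g S) = \<lfloor>sum x S\<rfloor> \<and> (\<forall>p\<in>S. \<bar>real (g p) - x p\<bar> \<le> 1)"
  using assms
proof (induction S rule: finite_induct)
  case empty
  then show ?case by (rule_tac x="\<lambda>_. 0" in exI) simp
next
  case (insert q S)
  then obtain g where g: "int (sum g S) = \<lfloor>sum x S\<rfloor>" "\<forall>p\<in>S. \<bar>real (g p) - x p\<bar> \<le> 1"
    by auto
  define F where "F = \<lfloor>sum x S\<rfloor>"
  define T where "T = \<lfloor>x q + sum x S\<rfloor>"
  have fl: "\<lfloor>x q\<rfloor> + F \<le> T" "T \<le> \<lfloor>x q\<rfloor> + F + 1"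
    unfolding F_def T_def by (simp_all add: floor_add)
  have xq: "0 \<le> x q" using insert by auto
  have "0 \<le> \<lfloor>x q\<rfloor>" using xq by simp
  define g' where "g' = g(q := nat (T - F))"
  have gS: "sum g' S = sum g S" using insert(2) unfolding g'_def by (intro sum.cong) auto
  have "sum g' (insert q S) = nat (T - F) + sum g S"
    using insert(1,2) gS unfolding g'_def by simp
  then have e1: "int (sum g' (insert q S)) = int (nat (T - F)) + int (sum g S)"
    by (simp only: of_nat_add)
  have TF: "0 \<le> T - F" using fl \<open>0 \<le> \<lfloor>x q\<rfloor>\<close> by linarith
  have e2: "int (nat (T - F)) + int (sum g S) = T" using TF g(1) unfolding F_def
    by (simp only: int_nat_eq) simp
  have e3: "T = \<lfloor>sum x (insert q S)\<rfloor>" using insert(1,2) unfolding T_def by simp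
  have s: "int (sum g' (insert q S)) = \<lfloor>sum x (insert q S)\<rfloor>"
    using e1 e2 e3 by linarith
  have "\<bar>real (nat (T - F)) - x q\<bar> \<le> 1"
  proof -
    have "real (nat (T - F)) = real_of_int (T - F)" using TF by (metis of_int_of_nat_eq int_nat_eq)
    moreover have "real_of_int \<lfloor>x q\<rfloor> \<le> x q" "x q < real_of_int \<lfloor>x q\<rfloor> + 1"
      by linarith+
    moreover have "real_of_int \<lfloor>x q\<rfloor> \<le> real_of_int (T - F)" "real_of_int (T - F) \<le> real_of_int \<lfloor>x q\<rfloor> + 1"
      using fl by linarith+
    ultimately show ?thesis by linarith
  qed
  then have "\<forall>p\<in>insert q S. \<bar>real (g' p) - x p\<bar> \<le> 1"
    using g(2) insert(2) unfolding g'_def by auto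
  with s show ?case by blast
qed

lemma scaled_round:
  assumes "finite S" "\<forall>p\<in>S. 0 \<le> x p" "real L \<le> sum x S"
  shows "\<exists>g::'a\<Rightarrow>nat. sum g S = L \<and> (\<forall>p\<in>S. \<bar>real (g p) - x p\<bar> \<le> 1 + (sum x S - L))"
proof (cases "sum x S = 0")
  case True
  then have "L = 0" using assms(3) by simp
  moreover have "\<forall>p\<in>S. x p = 0" using True assms(1,2) sum_nonneg_eq_0_iff by blast
  ultimately show ?thesis by (rule_tac x="\<lambda>_. 0" in exI) simp
next
  case False
  define X where "X = sum x S"
  have X: "X > 0" using False assms(2) sum_nonneg[of S x] unfolding X_def by force
  define x' where "x' p = x p * L / X" for p
  have "sum x' S = (sum x S) * L / X" unfolding x'_def by (simp add: sum_divide_distrib sum_distrib_right)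
  then have sx: "sum x' S = L" using X unfolding X_def by simp
  have "\<forall>p\<in>S. 0 \<le> x' p" using assms(2) X unfolding x'_def by simp
  from floor_round[OF assms(1) this] obtain g where
    g: "int (sum g S) = \<lfloor>sum x' S\<rfloor>" "\<forall>p\<in>S. \<bar>real (g p) - x' p\<bar> \<le> 1" by blast
  have "sum g S = L" using g(1) sx by (metis floor_of_nat of_nat_eq_iff)
  moreover have "\<bar>real (g p) - x p\<bar> \<le> 1 + (sum x S - L)" if p: "p \<in> S" for p
  proof -
    have xp: "0 \<le> x p" "x p \<le> X" using assms(1,2) p unfolding X_def by (auto intro: member_le_sum)
    have LX: "real L \<le> X" using assms(3) unfolding X_def .
    have "x p - x' p = x p * (X - L) / X" unfolding x'_def using X by (simp add: field_simps)
    also have "\<dots> \<le> X * (X - L) / X"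
      using xp LX X by (intro divide_right_mono mult_right_mono) auto
    also have "\<dots> = X - L" using X by simp
    finally have a: "x p - x' p \<le> X - L" .
    have b: "0 \<le> x p - x' p" using \<open>x p - x' p = x p * (X - L) / X\<close> xp LX X by simp
    have c: "real (g p) - x' p \<le> 1" "x' p - real (g p) \<le> 1" using g(2) p by (auto simp: abs_le_iff)
    show ?thesis unfolding abs_le_iff using a b c unfolding X_def by linarith
  qed
  ultimately show ?thesis by blast
qed

lemma count_round:
  fixes t :: "'a \<Rightarrow> real" and a :: "'a \<Rightarrow> nat"
  assumes "finite R" "\<forall>p\<in>R. 0 \<le> t p" "sum t R = real n" "sum a R = n"
  shows "\<exists>c::'a\<Rightarrow>nat. sum c R = n \<and> (\<forall>p\<in>R. t p < a p \<longrightarrow> c p \<le> a p)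
          \<and> (\<forall>p\<in>R. \<not> t p < a p \<longrightarrow> a p \<le> c p)
          \<and> (\<forall>p\<in>R. \<bar>real (c p) - t p\<bar> \<le> real (card R) + 1)"
proof -
  define D where "D = {p\<in>R. t p < a p}"
  have fD: "finite D" "finite (R - D)" "D \<subseteq> R" using assms(1) unfolding D_def by auto
  have ceil_le: "nat \<lceil>t p\<rceil> \<le> a p" if "p \<in> D" for p
    using that unfolding D_def by (simp add: ceiling_le_iff nat_le_iff)
  have ceil_r: "real (nat \<lceil>t p\<rceil>) = real_of_int \<lceil>t p\<rceil>" if "p \<in> R" for p
    using assms(2) that by simp
  define L where "L = (\<Sum>p\<in>D. a p - nat \<lceil>t p\<rceil>)"
  define x where "x p = t p - a p" for p
  have x0: "\<forall>p\<in>R - D. 0 \<le> x p" unfolding x_def D_def by auto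
  have split_t: "sum t R = sum t D + sum t (R - D)" using sum.subset_diff[OF fD(3) assms(1), of t] by simp
  have split_a: "real (sum a R) = real (sum a D) + real (sum a (R - D))"
    using sum.subset_diff[OF fD(3) assms(1), of a] by simp
  have sumx: "sum x (R - D) = real (sum a D) - sum t D"
    unfolding x_def using split_t split_a assms(3,4) by (simp add: sum_subtractf)
  have realL: "real L = real (sum a D) - (\<Sum>p\<in>D. real_of_int \<lceil>t p\<rceil>)"
  proof -
    have "real L = (\<Sum>p\<in>D. real (a p) - real (nat \<lceil>t p\<rceil>))"
      unfolding L_def of_nat_sum using ceil_le by (intro sum.cong) (auto simp: of_nat_diff)
    also have "\<dots> = real (sum a D) - (\<Sum>p\<in>D. real_of_int \<lceil>t p\<rceil>)"
      using ceil_r fD(3) by (simp add: sum_subtractf subset_iff)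
    finally show ?thesis .
  qed
  have ceil_ge: "(\<Sum>p\<in>D. t p) \<le> (\<Sum>p\<in>D. real_of_int \<lceil>t p\<rceil>)"
    by (intro sum_mono) simp
  have ceil_lt: "(\<Sum>p\<in>D. real_of_int \<lceil>t p\<rceil>) \<le> (\<Sum>p\<in>D. t p + 1)"
    by (intro sum_mono) linarith
  have cardD: "card D \<le> card R" using fD assms(1) by (simp add: card_mono)
  have LX: "real L \<le> sum x (R - D)" using sumx realL ceil_ge by simp
  have XL: "sum x (R - D) - real L \<le> real (card R)"
    using sumx realL ceil_lt cardD by (simp add: sum.distrib)
  obtain g where g: "sum g (R - D) = L" "\<forall>p\<in>R - D. \<bar>real (g p) - x p\<bar> \<le> 1 + (sum x (R - D) - L)"
    using scaled_round[OF fD(2) x0 LX] by blast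
  define c where "c p = (if p \<in> D then nat \<lceil>t p\<rceil> else a p + g p)" for p
  have "real (sum c R) = real (sum c D) + real (sum c (R - D))"
    using sum.subset_diff[OF fD(3) assms(1), of c] by simp
  also have "real (sum c D) = (\<Sum>p\<in>D. real_of_int \<lceil>t p\<rceil>)"
    unfolding c_def of_nat_sum using ceil_r fD(3) by (intro sum.cong) auto
  also have "real (sum c (R - D)) = real (sum a (R - D)) + real L"
    unfolding c_def g(1)[symmetric] by (simp add: sum.distrib)
  finally have "real (sum c R) = real n"
    using realL split_a assms(4) by simp
  then have sc: "sum c R = n" by (simp only: of_nat_eq_iff)
  have bnd: "\<bar>real (c p) - t p\<bar> \<le> real (card R) + 1" if p: "p \<in> R" for p
  proof (cases "p \<in> D")
    case True
    then show ?thesis using ceil_r[OF p] unfolding c_def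
      by simp linarith
  next
    case False
    then have "\<bar>real (g p) - x p\<bar> \<le> 1 + real (card R)" using g(2) p XL by force
    then show ?thesis using False unfolding c_def x_def by simp
  qed
  have c1: "\<forall>p\<in>R. t p < a p \<longrightarrow> c p \<le> a p" using ceil_le unfolding c_def D_def by auto
  have c2: "\<forall>p\<in>R. \<not> t p < a p \<longrightarrow> a p \<le> c p" unfolding c_def D_def by auto
  show ?thesis using sc bnd c1 c2 by blast
qed





lemma disc_val: "P \<in> disc_profiles m n \<Longrightarrow> v \<in> {1..n} \<Longrightarrow> P v \<in> rankings m"
  unfolding disc_profiles_def by auto

lemma sum_fibers:
  assumes "P \<in> disc_profiles m n"
  shows "(\<Sum>p\<in>rankings m. card {v\<in>{1..n}. P v = p}) = n"
proof -
  have eq1: "{1..n} = (\<Union>p\<in>rankings m. {v\<in>{1..n}. P v = p})"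
    using disc_val[OF assms] by auto
  have eq2: "card (\<Union>p\<in>rankings m. {v\<in>{1..n}. P v = p}) = (\<Sum>p\<in>rankings m. card {v\<in>{1..n}. P v = p})"
    by (rule card_UN_disjoint) (auto simp: rankings_finite)
  have "card {1..n} = (\<Sum>p\<in>rankings m. card {v\<in>{1..n}. P v = p})"
    by (subst eq1) (rule eq2)
  then show ?thesis by simp
qed

lemma sum_fibers_real:
  assumes "P \<in> disc_profiles m n"
  shows "(\<Sum>p\<in>rankings m. disc_weight n P p) = real n"
  using sum_fibers[OF assms] unfolding disc_weight_def by (metis of_nat_sum)

lemma dn_cont:
  assumes "P \<in> disc_profiles m n" "n \<ge> 1"
  shows "cont_profile m (disc_normalized n P)" "total_weight m (disc_normalized n P) = 1"
proof -
  have tw: "total_weight m (disc_normalized n P) = 1"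
    unfolding total_weight_def disc_normalized_def
    using sum_fibers_real[OF assms(1)] assms(2) by (simp add: sum_divide_distrib[symmetric])
  have z: "disc_normalized n P p = 0" if "p \<notin> rankings m" for p
  proof -
    have "{v\<in>{1..n}. P v = p} = {}" using disc_val[OF assms(1)] that by auto
    then show ?thesis unfolding disc_normalized_def disc_weight_def by simp
  qed
  show "cont_profile m (disc_normalized n P)"
    unfolding cont_profile_def using tw z
    by (auto simp: disc_normalized_def disc_weight_def)
  show "total_weight m (disc_normalized n P) = 1" by (rule tw)
qed

lemma prof_dist_lt:
  assumes "\<forall>p\<in>rankings m. \<bar>w p - w' p\<bar> < e"
  shows "prof_dist m w w' < e"
proof -
  have "finite ((\<lambda>p. \<bar>w p - w' p\<bar>) ` rankings m)" using rankings_finite by simp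
  moreover have "(\<lambda>p. \<bar>w p - w' p\<bar>) ` rankings m \<noteq> {}"
    unfolding rankings_def by (simp add: permutations_of_set_nonempty)
  ultimately show ?thesis unfolding prof_dist_def using assms by simp
qed

lemma assign:
  assumes P: "P \<in> disc_profiles m n" and sc: "sum c (rankings m) = n"
    and D: "D \<subseteq> rankings m"
    and cD: "\<forall>p\<in>D. c p \<le> card {v\<in>{1..n}. P v = p}"
    and cR: "\<forall>p\<in>rankings m - D. card {v\<in>{1..n}. P v = p} \<le> c p"
  shows "\<exists>Q\<in>disc_profiles m n. (\<forall>p\<in>rankings m. card {v\<in>{1..n}. Q v = p} = c p)
           \<and> (\<forall>v\<in>{1..n}. Q v \<noteq> P v \<longrightarrow> P v \<in> D)"
proof -
  define R where "R = rankings m"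
  define V where "V p = {v\<in>{1..n}. P v = p}" for p
  define a where "a p = card (V p)" for p
  have fR: "finite R" unfolding R_def by (rule rankings_finite)
  have fV: "finite (V p)" for p unfolding V_def by simp
  have sa: "sum a R = n" unfolding a_def V_def R_def by (rule sum_fibers[OF P])
  have "\<forall>p\<in>D. \<exists>F. F \<subseteq> V p \<and> card F = a p - c p"
  proof
    fix p assume "p \<in> D"
    have "a p - c p \<le> card (V p)" unfolding a_def by simp
    then obtain F where "F \<subseteq> V p" "card F = a p - c p" by (rule obtain_subset_with_card_n)
    then show "\<exists>F. F \<subseteq> V p \<and> card F = a p - c p" by blast
  qed
  then obtain Fs where Fs: "\<forall>p\<in>D. Fs p \<subseteq> V p \<and> card (Fs p) = a p - c p" by metis
  define F where "F = (\<Union>p\<in>D. Fs p)"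
  have fD: "finite D" using D fR R_def finite_subset by blast
  have fFs: "\<forall>p\<in>D. finite (Fs p)" using Fs fV finite_subset by blast
  have cardF: "card F = (\<Sum>p\<in>D. a p - c p)"
    unfolding F_def
  proof (subst card_UN_disjoint)
    show "\<forall>i\<in>D. \<forall>j\<in>D. i \<noteq> j \<longrightarrow> Fs i \<inter> Fs j = {}"
      using Fs unfolding V_def by blast
  qed (use fD fFs Fs in auto)
  have fF: "finite F" unfolding F_def using fD fFs by blast
  have F_sub: "F \<subseteq> {1..n}" "\<forall>v\<in>F. P v \<in> D" using Fs unfolding F_def V_def by blast+
  define E where "E = Sigma (R - D) (\<lambda>p. {..<c p - a p})"
  have fE: "finite E" unfolding E_def using fR by simp
  have cardE: "card E = (\<Sum>p\<in>R - D. c p - a p)" unfolding E_def using fR by simp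
  have "int (\<Sum>p\<in>D. a p - c p) = (\<Sum>p\<in>D. int (a p) - int (c p))"
    using cD unfolding a_def V_def by (simp add: of_nat_diff)
  also have "\<dots> = (\<Sum>p\<in>R - D. int (c p) - int (a p))"
  proof -
    have "int (sum a R) = int (sum c R)" using sa sc R_def by simp
    then have "(\<Sum>p\<in>R. int (a p)) = (\<Sum>p\<in>R. int (c p))" by simp
    moreover have "(\<Sum>p\<in>R. int (a p)) = (\<Sum>p\<in>R - D. int (a p)) + (\<Sum>p\<in>D. int (a p))"
      using sum.subset_diff[of D R] D fR R_def by simp
    moreover have "(\<Sum>p\<in>R. int (c p)) = (\<Sum>p\<in>R - D. int (c p)) + (\<Sum>p\<in>D. int (c p))"
      using sum.subset_diff[of D R] D fR R_def by simp
    ultimately show ?thesis by (simp add: sum_subtractf)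
  qed
  also have "\<dots> = int (\<Sum>p\<in>R - D. c p - a p)"
    using cR unfolding a_def V_def R_def by (simp add: of_nat_diff)
  finally have "(\<Sum>p\<in>D. a p - c p) = (\<Sum>p\<in>R - D. c p - a p)" by (simp only: of_nat_eq_iff)
  then have "card F = card E" using cardF cardE by simp
  then obtain h where h: "bij_betw h F E" using finite_same_card_bij[OF fF fE] by blast
  have hE: "v \<in> F \<Longrightarrow> h v \<in> E" for v using h by (auto simp: bij_betw_def)
  have hR: "v \<in> F \<Longrightarrow> fst (h v) \<in> R - D" for v using hE[of v] unfolding E_def by auto
  define Q where "Q v = (if v \<in> {1..n} then (if v \<in> F then fst (h v) else P v) else undefined)" for v
  have Qd: "Q \<in> disc_profiles m n"
    unfolding disc_profiles_def PiE_def extensional_def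
    using hR disc_val[OF P] unfolding Q_def R_def by auto
  have Qch: "\<forall>v\<in>{1..n}. Q v \<noteq> P v \<longrightarrow> P v \<in> D"
    using F_sub unfolding Q_def by auto
  have Qc: "card {v\<in>{1..n}. Q v = p} = c p" if p: "p \<in> R" for p
  proof (cases "p \<in> D")
    case True
    have "{v\<in>{1..n}. Q v = p} = V p - Fs p"
    proof (intro equalityI subsetI)
      fix v assume v: "v \<in> {v\<in>{1..n}. Q v = p}"
      have "v \<notin> F" using v hR True unfolding Q_def by auto
      then show "v \<in> V p - Fs p" using v True unfolding Q_def V_def F_def by auto
    next
      fix v assume v: "v \<in> V p - Fs p"
      have "v \<notin> F"
      proof
        assume "v \<in> F"
        then obtain p' where "p' \<in> D" "v \<in> Fs p'" unfolding F_def by auto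
        then have "P v = p'" using Fs unfolding V_def by auto
        moreover have "P v = p" using v unfolding V_def by auto
        ultimately show False using \<open>v \<in> Fs p'\<close> v by auto
      qed
      then show "v \<in> {v\<in>{1..n}. Q v = p}" using v unfolding Q_def V_def by auto
    qed
    then have "card {v\<in>{1..n}. Q v = p} = a p - (a p - c p)"
      using Fs True fFs fV unfolding a_def by (simp add: card_Diff_subset)
    then show ?thesis using cD True unfolding a_def V_def by simp
  next
    case False
    define G where "G = {v\<in>F. fst (h v) = p}"
    have "{v\<in>{1..n}. Q v = p} = V p \<union> G"
    proof (intro equalityI subsetI)
      fix v assume v: "v \<in> {v\<in>{1..n}. Q v = p}"
      then show "v \<in> V p \<union> G" unfolding Q_def V_def G_def by (auto split: if_splits)
    next
      fix v assume v: "v \<in> V p \<union> G"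
      then show "v \<in> {v\<in>{1..n}. Q v = p}"
      proof
        assume "v \<in> V p"
        then have "v \<notin> F" using F_sub False unfolding V_def by auto
        then show ?thesis using \<open>v \<in> V p\<close> unfolding Q_def V_def by auto
      next
        assume "v \<in> G"
        then show ?thesis using F_sub unfolding Q_def G_def by auto
      qed
    qed
    moreover have "V p \<inter> G = {}" using F_sub False unfolding V_def G_def by auto
    moreover have "finite G" unfolding G_def using fF by simp
    ultimately have c1: "card {v\<in>{1..n}. Q v = p} = a p + card G"
      unfolding a_def using fV by (simp add: card_Un_disjoint)
    have "h ` G = {p} \<times> {..<c p - a p}"
    proof (intro equalityI subsetI)
      fix e assume "e \<in> h ` G"
      then obtain v where "v \<in> G" "e = h v" by auto
      then show "e \<in> {p} \<times> {..<c p - a p}" using hE[of v] unfolding G_def E_def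
        by (cases e) auto
    next
      fix e assume e: "e \<in> {p} \<times> {..<c p - a p}"
      then have "e \<in> E" unfolding E_def using p False by auto
      then obtain v where "v \<in> F" "h v = e" using h by (auto simp: bij_betw_def)
      then show "e \<in> h ` G" using e unfolding G_def by auto
    qed
    moreover have "inj_on h G" using h unfolding G_def bij_betw_def by (auto intro: inj_on_subset)
    ultimately have "card G = c p - a p" by (metis card_image card_cartesian_product_singleton card_lessThan)
    then show ?thesis using c1 cR p False unfolding a_def V_def R_def by simp
  qed
  show ?thesis using Qd Qch Qc unfolding R_def by blast
qed


lemma core:
  assumes vr: "voting_rule m fd fc" and hom: "homogeneous m fd fc" and n1: "n \<ge> 1"
    and P: "P \<in> disc_profiles m n" and st: "stable_CM m fc \<delta> (disc_normalized n P)"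
    and nb: "(real (card (rankings m)) + 1) / real n < \<delta>"
  shows "CM_disc m fd n P"
proof -
  define R where "R = rankings m"
  define w where "w = disc_normalized n P"
  obtain Q where cm: "CM_cont m fc w Q"
    and stab: "\<forall>Q'. cont_profile m Q' \<and> prof_dist m Q Q' < \<delta> \<longrightarrow> fc Q' = fc Q"
    using st unfolding stable_CM_def w_def by blast
  have Qc: "cont_profile m Q" "total_weight m Q = 1" "fc Q \<noteq> fc w"
    "\<forall>p\<in>R. Q p < w p \<longrightarrow> prefers p (fc Q) (fc w)"
    using cm dn_cont[OF P n1] unfolding CM_cont_def w_def R_def by auto
  define t where "t p = real n * Q p" for p
  define a where "a p = card {v\<in>{1..n}. P v = p}" for p
  have t0: "\<forall>p\<in>R. 0 \<le> t p" using Qc(1) unfolding cont_profile_def t_def R_def by simp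
  have stt: "sum t R = real n" using Qc(2) unfolding t_def total_weight_def R_def
    by (simp add: sum_distrib_left[symmetric])
  have sa: "sum a R = n" unfolding a_def R_def by (rule sum_fibers[OF P])
  have wa: "w p = real (a p) / real n" for p
    unfolding w_def disc_normalized_def disc_weight_def a_def by simp
  have npos: "real n > 0" using n1 by simp
  have iff: "t p < real (a p) \<longleftrightarrow> Q p < w p" for p
    unfolding t_def wa using npos by (simp add: pos_less_divide_eq mult.commute)
  obtain c where c: "sum c R = n" "\<forall>p\<in>R. t p < a p \<longrightarrow> c p \<le> a p"
      "\<forall>p\<in>R. \<not> t p < a p \<longrightarrow> a p \<le> c p" "\<forall>p\<in>R. \<bar>real (c p) - t p\<bar> \<le> real (card R) + 1"
    using count_round[OF _ t0 stt sa] rankings_finite unfolding R_def by blast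
  define D where "D = {p\<in>R. Q p < w p}"
  have cD: "\<forall>p\<in>D. c p \<le> card {v\<in>{1..n}. P v = p}" using c(2) iff unfolding D_def a_def by auto
  have cR: "\<forall>p\<in>rankings m - D. card {v\<in>{1..n}. P v = p} \<le> c p"
    using c(3) iff unfolding D_def a_def R_def by auto
  obtain Qd where Qd: "Qd \<in> disc_profiles m n" "\<forall>p\<in>R. card {v\<in>{1..n}. Qd v = p} = c p"
      "\<forall>v\<in>{1..n}. Qd v \<noteq> P v \<longrightarrow> P v \<in> D"
    using assign[OF P c(1)[unfolded R_def], of D] cD cR unfolding D_def R_def by auto
  define w' where "w' = disc_normalized n Qd"
  have w'c: "cont_profile m w'" using dn_cont[OF Qd(1) n1] unfolding w'_def by simp
  have "prof_dist m Q w' < \<delta>"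
  proof (rule prof_dist_lt, intro ballI)
    fix p assume p: "p \<in> rankings m"
    have "w' p = real (c p) / real n" using Qd(2) p
      unfolding w'_def disc_normalized_def disc_weight_def R_def by simp
    then have "Q p - w' p = (t p - real (c p)) / real n" unfolding t_def using npos
      by (simp add: field_simps)
    then have "\<bar>Q p - w' p\<bar> = \<bar>real (c p) - t p\<bar> / real n"
      by (simp add: abs_minus_commute)
    also have "\<dots> \<le> (real (card R) + 1) / real n"
      using c(4) p npos unfolding R_def by (intro divide_right_mono) auto
    also have "\<dots> < \<delta>" using nb unfolding R_def .
    finally show "\<bar>Q p - w' p\<bar> < \<delta>" .
  qed
  then have fw': "fc w' = fc Q" using stab w'c by blast
  have fdQ: "fd n Qd = fc w'" using hom Qd(1) n1 unfolding homogeneous_def w'_def by blast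
  have fdP: "fd n P = fc w" using hom P n1 unfolding homogeneous_def w_def by blast
  show ?thesis unfolding CM_disc_def
  proof (rule bexI[of _ Qd])
    show "Qd \<in> disc_profiles m n" by (rule Qd(1))
    show "fd n Qd \<noteq> fd n P \<and> (\<forall>v\<in>{1..n}. Qd v \<noteq> P v \<longrightarrow> prefers (P v) (fd n Qd) (fd n P))"
      using fdQ fdP fw' Qc(3,4) Qd(3) unfolding D_def by auto
  qed
qed

theorem lemma4p2:
  fixes m :: nat and \<theta> :: real
    and fd :: "nat \<Rightarrow> (nat \<Rightarrow> nat list) \<Rightarrow> nat" and fc :: "(nat list \<Rightarrow> real) \<Rightarrow> nat"
  assumes "m \<ge> 1" and "0 < \<theta>" and "\<theta> \<le> 1"
    and "voting_rule m fd fc" and "homogeneous m fd fc"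
    and "\<exists>\<delta>>0. \<exists>U. U \<subseteq> {w. normalized_profile m w}
           \<and> (\<exists>\<epsilon>>0. {w. normalized_profile m w \<and> prof_dist m w (P_hat m \<theta>) < \<epsilon>} \<subseteq> U)
           \<and> (\<forall>w\<in>U. stable_CM m fc \<delta> w)"
  shows "(\<lambda>n. rho m fd n \<theta>) \<longlonglongrightarrow> 1"
proof -
  obtain \<delta> U \<epsilon> where d: "\<delta> > 0" and e: "\<epsilon> > 0"
    and UE: "{w. normalized_profile m w \<and> prof_dist m w (P_hat m \<theta>) < \<epsilon>} \<subseteq> U"
    and US: "\<forall>w\<in>U. stable_CM m fc \<delta> w"
    using assms(6) by blast
  define R where "R = rankings m"
  define k where "k = real (card R)"
  define N where "N = nat \<lceil>(k + 1) / \<delta>\<rceil> + 1"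
  define lo where "lo n = 1 - k * (2 * exp (-2 * real n * \<epsilon>\<^sup>2))" for n :: nat
  have ex: "exp (-2 * real n * \<epsilon>\<^sup>2) = exp (-2 * \<epsilon>\<^sup>2) ^ n" for n :: nat
    using exp_of_nat_mult[of n "-2 * \<epsilon>\<^sup>2"] by (simp add: mult.commute mult.left_commute)
  have "(\<lambda>n. exp (-2 * \<epsilon>\<^sup>2) ^ n) \<longlonglongrightarrow> 0"
    by (rule LIMSEQ_power_zero) (use e in simp)
  then have "(\<lambda>n. exp (-2 * real n * \<epsilon>\<^sup>2)) \<longlonglongrightarrow> 0" unfolding ex .
  then have "(\<lambda>n. 1 - k * (2 * exp (-2 * real n * \<epsilon>\<^sup>2))) \<longlonglongrightarrow> 1 - k * (2 * 0)"
    by (intro tendsto_intros)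
  then have lo_lim: "lo \<longlonglongrightarrow> 1" unfolding lo_def by simp
  have up: "rho m fd n \<theta> \<le> 1" for n unfolding rho_def by simp
  have low: "lo n \<le> rho m fd n \<theta>" if nN: "n \<ge> N" for n
  proof -
    have n1: "n \<ge> 1" using nN unfolding N_def by simp
    have npos: "real n > 0" using n1 by simp
    have "(k + 1) / \<delta> < real n"
      using nN unfolding N_def by linarith
    then have nb: "(real (card (rankings m)) + 1) / real n < \<delta>"
      using d npos unfolding k_def R_def by (simp add: field_simps)
    define Bad where "Bad p = {P. \<epsilon> \<le> \<bar>disc_weight n P p / real n - P_hat m \<theta> p\<bar>}" for p
    let ?M = "PC_pmf m n \<theta>"
    have sub: "{P. \<not> CM_disc m fd n P} \<inter> set_pmf ?M \<subseteq> (\<Union>p\<in>R. Bad p)"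
    proof
      fix P assume P: "P \<in> {P. \<not> CM_disc m fd n P} \<inter> set_pmf ?M"
      then have Pd: "P \<in> disc_profiles m n" using set_PC by blast
      show "P \<in> (\<Union>p\<in>R. Bad p)"
      proof (rule ccontr)
        assume "P \<notin> (\<Union>p\<in>R. Bad p)"
        then have "\<forall>p\<in>rankings m. \<bar>disc_normalized n P p - P_hat m \<theta> p\<bar> < \<epsilon>"
          unfolding Bad_def R_def disc_normalized_def by auto
        then have "prof_dist m (disc_normalized n P) (P_hat m \<theta>) < \<epsilon>" by (rule prof_dist_lt)
        moreover have "normalized_profile m (disc_normalized n P)"
          using dn_cont[OF Pd n1] unfolding normalized_profile_def by simp
        ultimately have "disc_normalized n P \<in> U" using UE by blast
        then have "stable_CM m fc \<delta> (disc_normalized n P)" using US by blast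
        then have "CM_disc m fd n P" using core[OF assms(4,5) n1 Pd _ nb] by blast
        then show False using P by blast
      qed
    qed
    have "measure_pmf.prob ?M {P. \<not> CM_disc m fd n P}
        = measure_pmf.prob ?M ({P. \<not> CM_disc m fd n P} \<inter> set_pmf ?M)"
      by (simp add: measure_Int_set_pmf)
    also have "\<dots> \<le> measure_pmf.prob ?M (\<Union>p\<in>R. Bad p)"
      using sub by (intro measure_pmf.finite_measure_mono) auto
    also have "\<dots> \<le> (\<Sum>p\<in>R. measure_pmf.prob ?M (Bad p))"
      using rankings_finite unfolding R_def by (intro measure_pmf.finite_measure_subadditive_finite) auto
    also have "\<dots> \<le> (\<Sum>p\<in>R. 2 * exp (-2 * real n * \<epsilon>\<^sup>2))"
      unfolding Bad_def R_def
      by (intro sum_mono bad_prob) (use assms(2,3) n1 e in auto)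
    also have "\<dots> = k * (2 * exp (-2 * real n * \<epsilon>\<^sup>2))" unfolding k_def by simp
    finally have "measure_pmf.prob ?M {P. \<not> CM_disc m fd n P} \<le> k * (2 * exp (-2 * real n * \<epsilon>\<^sup>2))" .
    moreover have "measure_pmf.prob ?M {P. \<not> CM_disc m fd n P} = 1 - rho m fd n \<theta>"
    proof -
      have "{P. \<not> CM_disc m fd n P} = space (measure_pmf ?M) - {P. CM_disc m fd n P}" by auto
      moreover have "measure_pmf.prob ?M (space (measure_pmf ?M) - {P. CM_disc m fd n P})
          = 1 - measure_pmf.prob ?M {P. CM_disc m fd n P}"
        by (rule measure_pmf.prob_compl) simp
      ultimately show ?thesis unfolding rho_def by simp
    qed
    ultimately show ?thesis unfolding lo_def by simp
  qed
  show ?thesis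
  proof (rule tendsto_sandwich[OF _ _ lo_lim tendsto_const])
    show "\<forall>\<^sub>F n in sequentially. lo n \<le> rho m fd n \<theta>"
      using low by (auto simp: eventually_sequentially)
    show "\<forall>\<^sub>F n in sequentially. rho m fd n \<theta> \<le> 1"
      using up by simp
  qed
qed

end
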